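(* Let $n$ be an even positive integer, $p$ a prime dividing $n$, and $p^a$ the largest power of $p$ dividing $n$. Suppose there is a prime $q$ with $q<n/2$ and $n-2q<p^a$. If there is a multiple $k$ of $p^a$ in the interval $[q,n/2]$, then $p$ is odd and $k=n/2$. *)

theory Defs
  imports "HOL-Computational_Algebra.Primes"
begin

end

theory Submission
  imports Defs
begin

theorem mainTheorem19:
  fixes n p q k :: nat
  assumes "even n" and "n > 0"
    and "prime p" and "p dvd n"
    and "prime q" and "2 * q < n" and "n - 2 * q < p ^ multiplicity p n"
    and "p ^ multiplicity p n dvd k"
    and "q \<le> k" and "2 * k \<le> n"
  shows "odd p \<and> 2 * k = n"
proof -
  define P where "P = p ^ multiplicity p n"
  have Pn: "P dvd n" unfolding P_def by (rule multiplicity_dvd)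
  have Pk: "P dvd 2 * k" using assms(8) unfolding P_def by simp
  have "P dvd n - 2 * k" using Pn Pk by (rule dvd_diff_nat)
  moreover have "n - 2 * k < P" using assms(7,9) unfolding P_def by linarith
  ultimately have "n - 2 * k = 0" using dvd_imp_le by (metis neq0_conv not_le)
  hence nk: "2 * k = n" using assms(10) by linarith
  have "odd p"
  proof
    assume "even p"
    hence p2: "p = 2" using assms(3) by (metis prime_nat_iff dvd_antisym even_zero
        prime_ge_2_nat nat_dvd_not_less not_less0 numeral_eq_one_iff semiring_norm(85))
    have "p ^ Suc (multiplicity p n) dvd n"
      using nk assms(8) p2 by auto
    hence "Suc (multiplicity p n) \<le> multiplicity p n"
      using assms(2,3) by (subst (asm) power_dvd_iff_le_multiplicity) auto
    thus False by simp
  qed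
  thus ?thesis using nk by simp
qed

end
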